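(* Let $k$ be a field and let $A$ be a just infinite $k$-algebra that does not satisfy a polynomial identity and is not simple. Then the center $Z(A)$ is a field which is a finite dimensional extension of $k$.
   Context: All rings are associative unital algebras over a field. A $k$-algebra $A$ is called just infinite if $\dim_k(A)=\infty$ and every nonzero two-sided ideal of $A$ has finite codimension in $A$. *)

theory Defs
  imports Complex_Main
begin

definition k_algebra :: "('k::field \<Rightarrow> 'a::ring_1 \<Rightarrow> 'a) \<Rightarrow> bool" where
  "k_algebra smul \<longleftrightarrow> vector_space smul \<and>
     (\<forall>c x y. smul c (x * y) = smul c x * y \<and> smul c (x * y) = x * smul c y)"

definition fin_dim :: "('k::field \<Rightarrow> 'a::ring_1 \<Rightarrow> 'a) \<Rightarrow> 'a set \<Rightarrow> bool" where
  "fin_dim smul V \<longleftrightarrow> (\<exists>S. finite S \<and> S \<subseteq> V \<and> module.span smul S = V)"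

definition two_sided_ideal :: "'a::ring_1 set \<Rightarrow> bool" where
  "two_sided_ideal I \<longleftrightarrow> 0 \<in> I \<and> (\<forall>x\<in>I. \<forall>y\<in>I. x + y \<in> I) \<and>
     (\<forall>x\<in>I. \<forall>a. a * x \<in> I \<and> x * a \<in> I)"

text \<open>Finite codimension of a subspace I: A / I finite dimensional, i.e.
  A is spanned by I together with finitely many elements.\<close>
definition fin_codim :: "('k::field \<Rightarrow> 'a::ring_1 \<Rightarrow> 'a) \<Rightarrow> 'a set \<Rightarrow> bool" where
  "fin_codim smul I \<longleftrightarrow> (\<exists>S. finite S \<and> module.span smul (S \<union> I) = UNIV)"

definition just_infinite :: "('k::field \<Rightarrow> 'a::ring_1 \<Rightarrow> 'a) \<Rightarrow> bool" where
  "just_infinite smul \<longleftrightarrow> \<not> fin_dim smul (UNIV :: 'a set) \<and>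
     (\<forall>I. two_sided_ideal I \<and> I \<noteq> {0} \<longrightarrow> fin_codim smul I)"

definition simple_algebra :: "'a::ring_1 itself \<Rightarrow> bool" where
  "simple_algebra _ \<longleftrightarrow> (0::'a) \<noteq> 1 \<and>
     (\<forall>I::'a set. two_sided_ideal I \<longrightarrow> I = {0} \<or> I = UNIV)"

text \<open>Noncommutative polynomials in variables x_0, x_1, ... over k: finitely supported
  coefficient functions on words (lists of variable indices). Evaluation at a : nat => 'a.\<close>
definition nc_eval :: "('k::field \<Rightarrow> 'a::ring_1 \<Rightarrow> 'a) \<Rightarrow> (nat list \<Rightarrow> 'k) \<Rightarrow> (nat \<Rightarrow> 'a) \<Rightarrow> 'a" where
  "nc_eval smul f a = (\<Sum>w\<in>{w. f w \<noteq> 0}. smul (f w) (prod_list (map a w)))"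

definition satisfies_PI :: "('k::field \<Rightarrow> 'a::ring_1 \<Rightarrow> 'a) \<Rightarrow> bool" where
  "satisfies_PI smul \<longleftrightarrow> (\<exists>f :: nat list \<Rightarrow> 'k. finite {w. f w \<noteq> 0} \<and> f \<noteq> (\<lambda>_. 0) \<and>
     (\<forall>a. nc_eval smul f a = 0))"

definition center :: "'a::ring_1 set" where
  "center = {z. \<forall>a. z * a = a * z}"

end

theory Submission
  imports Defs "HOL-Combinatorics.Permutations"
begin

definition Wm :: "nat \<Rightarrow> nat list set" where
  "Wm m = {w. distinct w \<and> set w = {0..<m}}"

definition pw :: "nat list \<Rightarrow> nat \<Rightarrow> nat" where
  "pw w = (\<lambda>i. if i < length w then w ! i else i)"

definition sgnw :: "nat list \<Rightarrow> int" where
  "sgnw w = sign (pw w)"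

definition Phi :: "nat \<Rightarrow> (nat \<Rightarrow> 'a::ring_1) \<Rightarrow> 'a" where
  "Phi m a = (\<Sum>w\<in>Wm m. of_int (sgnw w) * prod_list (map a w))"

lemma Wm_length: "w \<in> Wm m \<Longrightarrow> length w = m"
  unfolding Wm_def using distinct_card by fastforce

lemma finite_Wm: "finite (Wm m)"
proof -
  have "Wm m \<subseteq> {xs. set xs \<subseteq> {0..<m} \<and> length xs = m}"
    using Wm_length by (auto simp: Wm_def)
  then show ?thesis using finite_lists_length_eq[OF finite_atLeastLessThan] finite_subset by blast
qed

lemma pw_permutes: assumes "w \<in> Wm m" shows "pw w permutes {0..<m}"
proof (rule bij_imp_permutes)
  have l: "length w = m" using Wm_length assms by auto
  have "bij_betw ((!) w) {..<m} {0..<m}"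
    using assms l by (intro bij_betw_nth) (auto simp: Wm_def)
  moreover have "bij_betw (pw w) {0..<m} {0..<m} \<longleftrightarrow> bij_betw ((!) w) {0..<m} {0..<m}"
    by (rule bij_betw_cong) (auto simp: pw_def l)
  ultimately show "bij_betw (pw w) {0..<m} {0..<m}" by (simp add: atLeast0LessThan)
  show "x \<notin> {0..<m} \<Longrightarrow> pw w x = x" for x using l by (auto simp: pw_def)
qed

lemma pw_permutation: "w \<in> Wm m \<Longrightarrow> permutation (pw w)"
  using pw_permutes permutes_imp_permutation by blast

lemma sgnw_cases: "sgnw w = 1 \<or> sgnw w = -1"
  unfolding sgnw_def by (cases "pw w" rule: sign_cases) auto

lemma map_transpose_Wm:
  assumes "w \<in> Wm m" "i < m" "j < m"
  shows "map (transpose i j) w \<in> Wm m"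
proof -
  have "inj (transpose i j)" by (rule inj_transpose)
  moreover have "transpose i j ` {0..<m} = {0..<m}"
    using assms(2,3) by (simp add: transpose_image_eq)
  ultimately show ?thesis using assms(1) by (simp add: Wm_def distinct_map)
qed

lemma pw_map_transpose:
  assumes "w \<in> Wm m" "i < m" "j < m"
  shows "pw (map (transpose i j) w) = transpose i j \<circ> pw w"
  using assms Wm_length[OF assms(1)] by (auto simp: pw_def transpose_def fun_eq_iff)

lemma sgnw_map_transpose:
  assumes "w \<in> Wm m" "i < m" "j < m" "i \<noteq> j"
  shows "sgnw (map (transpose i j) w) = - sgnw w"
  using assms pw_map_transpose[OF assms(1-3)]
  by (simp add: sgnw_def sign_compose permutation_swap_id pw_permutation sign_swap_id)

lemma Phi_alt:
  fixes a :: "nat \<Rightarrow> 'a::ring_1"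
  assumes "i < m" "j < m" "i \<noteq> j" "a i = a j"
  shows "Phi m a = 0"
proof -
  let ?t = "transpose i j"
  let ?h = "map ?t"
  let ?P = "\<lambda>w. prod_list (map a w)"
  define Wp where "Wp = {w\<in>Wm m. sgnw w = 1}"
  define Wn where "Wn = {w\<in>Wm m. sgnw w = -1}"
  have at: "a \<circ> ?t = a" using assms(4) by (auto simp: transpose_def fun_eq_iff)
  have Ph: "?P (?h w) = ?P w" for w using at by (simp add: map_map)
  have hh: "?h (?h w) = w" for w by (simp add: map_map comp_def)
  have bij: "bij_betw ?h Wp Wn"
  proof (rule bij_betw_byWitness[where f'="?h"])
    show "\<forall>w\<in>Wp. ?h (?h w) = w" "\<forall>w\<in>Wn. ?h (?h w) = w" using hh by auto
    show "?h ` Wp \<subseteq> Wn" using assms map_transpose_Wm sgnw_map_transpose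
      by (auto simp: Wp_def Wn_def)
    show "?h ` Wn \<subseteq> Wp" using assms map_transpose_Wm sgnw_map_transpose
      by (fastforce simp: Wp_def Wn_def)
  qed
  have split: "Wm m = Wp \<union> Wn" "Wp \<inter> Wn = {}"
    using sgnw_cases by (auto simp: Wp_def Wn_def)
  have fin: "finite Wp" "finite Wn" using finite_Wm by (auto simp: Wp_def Wn_def)
  have "Phi m a = (\<Sum>w\<in>Wp. of_int (sgnw w) * ?P w) + (\<Sum>w\<in>Wn. of_int (sgnw w) * ?P w)"
    unfolding Phi_def split(1) by (rule sum.union_disjoint[OF fin split(2)])
  also have "(\<Sum>w\<in>Wp. of_int (sgnw w) * ?P w) = (\<Sum>w\<in>Wp. ?P w)"
    by (rule sum.cong) (auto simp: Wp_def)
  also have "(\<Sum>w\<in>Wn. of_int (sgnw w) * ?P w) = - (\<Sum>w\<in>Wn. ?P w)"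
    by (auto simp: Wn_def sum_negf intro!: sum.cong)
  also have "(\<Sum>w\<in>Wn. ?P w) = (\<Sum>w\<in>Wp. ?P (?h w))"
    using sum.reindex_bij_betw[OF bij, of ?P] by simp
  also have "\<dots> = (\<Sum>w\<in>Wp. ?P w)" using Ph by simp
  finally show ?thesis by simp
qed

lemma prod_split_slot:
  fixes a :: "nat \<Rightarrow> 'a::ring_1"
  assumes "distinct w" "k \<in> set w"
  shows "\<exists>y z. \<forall>x. prod_list (map (a(k:=x)) w) = y * x * z"
proof -
  obtain ys zs where w: "w = ys @ k # zs" using split_list[OF assms(2)] by blast
  have "k \<notin> set ys" "k \<notin> set zs" using assms(1) w by auto
  then have e1: "map (a(k:=x)) ys = map a ys" and e2: "map (a(k:=x)) zs = map a zs" for x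
    by (auto intro!: map_cong)
  have "prod_list (map (a(k:=x)) w) = prod_list (map a ys) * x * prod_list (map a zs)" for x
    by (simp add: w e1 e2 mult.assoc)
  then show ?thesis by blast
qed

lemma Phi_lin:
  fixes a :: "nat \<Rightarrow> 'a::ring_1"
  assumes "k < m"
  shows "\<exists>Y Z. \<forall>x. Phi m (a(k:=x)) = (\<Sum>w\<in>Wm m. Y w * x * Z w)"
proof -
  have ex: "\<forall>w. \<exists>p. w \<in> Wm m \<longrightarrow> (\<forall>x. prod_list (map (a(k:=x)) w) = fst p * x * snd p)"
  proof
    fix w
    show "\<exists>p. w \<in> Wm m \<longrightarrow> (\<forall>x. prod_list (map (a(k:=x)) w) = fst p * x * snd p)"
    proof (cases "w \<in> Wm m")
      case True
      then have "distinct w" "k \<in> set w" using assms by (auto simp: Wm_def)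
      then obtain y z where "\<forall>x. prod_list (map (a(k:=x)) w) = y * x * z"
        using prod_split_slot by blast
      then show ?thesis by (intro exI[of _ "(y, z)"]) simp
    qed simp
  qed
  obtain P where P: "\<forall>w. w \<in> Wm m \<longrightarrow> (\<forall>x. prod_list (map (a(k:=x)) w) = fst (P w) * x * snd (P w))"
    using choice[OF ex] by blast
  have "Phi m (a(k:=x)) = (\<Sum>w\<in>Wm m. (of_int (sgnw w) * fst (P w)) * x * snd (P w))" for x
    unfolding Phi_def by (rule sum.cong[OF refl]) (simp add: P mult.assoc)
  then show ?thesis
    by (intro exI[of _ "\<lambda>w. of_int (sgnw w) * fst (P w)"] exI[of _ "\<lambda>w. snd (P w)"]) simp
qed


lemma center_mult: "x \<in> center \<Longrightarrow> y \<in> center \<Longrightarrow> x * y \<in> (center::'a::ring_1 set)"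
proof -
  assume x: "x \<in> center" and y: "y \<in> center"
  have "x * y * a = a * (x * y)" for a
  proof -
    have "x * y * a = x * (a * y)" using y by (simp add: center_def mult.assoc)
    also have "\<dots> = (x * a) * y" by (simp add: mult.assoc)
    also have "\<dots> = a * (x * y)" using x by (simp add: center_def mult.assoc)
    finally show ?thesis .
  qed
  then show ?thesis by (simp add: center_def)
qed

lemma center_add: "x \<in> center \<Longrightarrow> y \<in> center \<Longrightarrow> x + y \<in> (center::'a::ring_1 set)"
  unfolding center_def by (simp add: distrib_left distrib_right)

lemma center_diff: "x \<in> center \<Longrightarrow> y \<in> center \<Longrightarrow> x - y \<in> (center::'a::ring_1 set)"
  unfolding center_def by (simp add: left_diff_distrib right_diff_distrib)

lemma center_1: "1 \<in> (center::'a::ring_1 set)" and center_0: "0 \<in> (center::'a::ring_1 set)"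
  unfolding center_def by simp_all

lemma center_power: "x \<in> center \<Longrightarrow> x ^ n \<in> (center::'a::ring_1 set)"
  by (induction n) (auto intro: center_mult center_1)

lemma centerD: "x \<in> center \<Longrightarrow> x * y = y * (x::'a::ring_1)"
  unfolding center_def by auto

lemma ideal_sum: "two_sided_ideal I \<Longrightarrow> (\<And>x. x \<in> A \<Longrightarrow> f x \<in> I) \<Longrightarrow> sum f A \<in> I"
  unfolding two_sided_ideal_def
  by (induction A rule: infinite_finite_induct) auto

lemma ideal_mult_left: "two_sided_ideal I \<Longrightarrow> x \<in> I \<Longrightarrow> a * x \<in> I"
  and ideal_mult_right: "two_sided_ideal I \<Longrightarrow> x \<in> I \<Longrightarrow> x * a \<in> I"
  and ideal_add: "two_sided_ideal I \<Longrightarrow> x \<in> I \<Longrightarrow> y \<in> I \<Longrightarrow> x + y \<in> I"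
  and ideal_0: "two_sided_ideal I \<Longrightarrow> 0 \<in> I"
  unfolding two_sided_ideal_def by auto

lemma ideal_minus: "two_sided_ideal I \<Longrightarrow> x \<in> I \<Longrightarrow> - x \<in> I"
  using ideal_mult_left[of I x "-1"] by simp

lemma ideal_diff: "two_sided_ideal I \<Longrightarrow> x \<in> I \<Longrightarrow> y \<in> I \<Longrightarrow> x - y \<in> I"
  using ideal_add[of I x "-y"] ideal_minus[of I y] by simp

lemma lin_sum:
  "(\<Sum>w\<in>W. Y w * (\<Sum>s\<in>S. f s) * Z w) = (\<Sum>s\<in>S. \<Sum>w\<in>W. Y w * f s * (Z w::'a::ring_1))"
  by (simp add: sum_distrib_left sum_distrib_right sum.swap[of _ W])

lemma lin_c:
  assumes "c \<in> center"
  shows "(\<Sum>w\<in>W. Y w * (c * x) * Z w) = c * (\<Sum>w\<in>W. Y w * x * (Z w::'a::ring_1))"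
proof -
  have "Y w * (c * x) * Z w = c * (Y w * x * Z w)" for w
    using centerD[OF assms, of "Y w"] by (simp add: mult.assoc[symmetric])
  then show ?thesis by (simp add: sum_distrib_left)
qed

lemma lin_add:
  "(\<Sum>w\<in>W. Y w * (x + y) * Z w) = (\<Sum>w\<in>W. Y w * x * Z w) + (\<Sum>w\<in>W. Y w * y * (Z w::'a::ring_1))"
  by (simp add: distrib_left distrib_right sum.distrib)

lemma Phi_ideal:
  fixes a :: "nat \<Rightarrow> 'a::ring_1"
  assumes "two_sided_ideal J" "i < m" "a i \<in> J"
  shows "Phi m a \<in> J"
proof -
  obtain Y Z where YZ: "\<And>x. Phi m (a(i:=x)) = (\<Sum>w\<in>Wm m. Y w * x * Z w)"
    using Phi_lin[OF assms(2), of a] by blast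
  have "Phi m a = Phi m (a(i:=a i))" by simp
  also have "\<dots> \<in> J" unfolding YZ
    by (intro ideal_sum[OF assms(1)] ideal_mult_right[OF assms(1)] ideal_mult_left[OF assms(1)] assms(3))
  finally show ?thesis .
qed

lemma GS:
  fixes S :: "'a::ring_1 set"
  assumes J: "two_sided_ideal J" and finS: "finite S"
  and R: "\<And>x. \<exists>c. (\<forall>s. c s \<in> center) \<and> x - (\<Sum>s\<in>S. c s * s) \<in> J"
  and G0: "0 \<in> G" and Gadd: "\<And>x y. x\<in>G \<Longrightarrow> y\<in>G \<Longrightarrow> x+y\<in>G"
  and Gc: "\<And>c x. c\<in>center \<Longrightarrow> x\<in>G \<Longrightarrow> c*x\<in>G"
  and base: "\<And>a. (\<forall>i<m. a i \<in> S \<union> J) \<Longrightarrow> Phi m a \<in> G"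
  shows "Phi m a \<in> G"
proof -
  have Gsum: "(\<And>x. x \<in> A \<Longrightarrow> f x \<in> G) \<Longrightarrow> sum f A \<in> G" for f and A :: "'b set"
    by (induction A rule: infinite_finite_induct) (auto intro: G0 Gadd)
  have claim: "k \<le> m \<Longrightarrow> \<forall>a. (\<forall>i. k \<le> i \<and> i < m \<longrightarrow> a i \<in> S \<union> J) \<longrightarrow> Phi m a \<in> G" for k
  proof (induction k)
    case 0
    then show ?case using base by auto
  next
    case (Suc k)
    show ?case
    proof (intro allI impI)
      fix a :: "nat \<Rightarrow> 'a"
      assume H: "\<forall>i. Suc k \<le> i \<and> i < m \<longrightarrow> a i \<in> S \<union> J"
      have km: "k < m" using Suc by auto
      obtain c where c: "\<forall>s. c s \<in> center" and cj: "a k - (\<Sum>s\<in>S. c s * s) \<in> J"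
        using R by blast
      define j where "j = a k - (\<Sum>s\<in>S. c s * s)"
      have ak: "a k = (\<Sum>s\<in>S. c s * s) + j" unfolding j_def by simp
      obtain Y Z where YZ: "\<And>x. Phi m (a(k:=x)) = (\<Sum>w\<in>Wm m. Y w * x * Z w)"
        using Phi_lin[OF km, of a] by blast
      have IH: "Phi m (a(k:=x)) \<in> G" if "x \<in> S \<union> J" for x
        using Suc.IH[rule_format, of "a(k:=x)"] Suc.prems H that by auto
      have "Phi m a = Phi m (a(k:=a k))" by simp
      also have "\<dots> = (\<Sum>s\<in>S. c s * Phi m (a(k:=s))) + Phi m (a(k:=j))"
        unfolding YZ ak lin_add lin_sum using c by (simp add: lin_c)
      also have "\<dots> \<in> G"
        using IH cj c by (auto intro!: Gadd Gsum Gc simp: j_def)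
      finally show "Phi m a \<in> G" .
    qed
  qed
  show ?thesis using claim[OF order_refl] by auto
qed


locale kalg =
  fixes smul :: "'k::field \<Rightarrow> 'a::ring_1 \<Rightarrow> 'a"
  assumes kalg: "k_algebra smul"
begin

sublocale vector_space smul
  using kalg by (simp add: k_algebra_def)

lemma smul_mult_left: "smul c (x * y) = smul c x * y"
  using kalg unfolding k_algebra_def by blast

lemma smul_mult_right: "smul c (x * y) = x * smul c y"
  using kalg unfolding k_algebra_def by blast

lemma smul_one_mult: "smul c x = smul c 1 * x"
  using smul_mult_left[of c 1 x] by simp

lemma smul1_center: "smul c 1 \<in> center"
proof -
  have "smul c 1 * a = a * smul c 1" for a
  proof -
    have "smul c 1 * a = smul c (1 * a)" by (rule smul_mult_left[symmetric])
    also have "\<dots> = smul c (a * 1)" by simp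
    also have "\<dots> = a * smul c 1" by (rule smul_mult_right)
    finally show ?thesis .
  qed
  then show ?thesis unfolding center_def by blast
qed

lemma ideal_smul: "two_sided_ideal I \<Longrightarrow> x \<in> I \<Longrightarrow> smul c x \<in> I"
  using smul_one_mult[of c x] ideal_mult_left by metis

lemma ideal_subspace: "two_sided_ideal I \<Longrightarrow> subspace I"
  unfolding subspace_def using ideal_smul ideal_add ideal_0 by blast

lemma center_subspace: "subspace center"
  unfolding subspace_def
proof (intro conjI ballI allI)
  show "0 \<in> center" by (rule center_0)
  show "x + y \<in> center" if "x \<in> center" "y \<in> center" for x y using that by (rule center_add)
  show "smul c x \<in> center" if "x \<in> center" for c x
  proof -
    have "smul c x * a = a * smul c x" for a
    proof -
      have "smul c x * a = smul c (x * a)" by (rule smul_mult_left[symmetric])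
      also have "\<dots> = smul c (a * x)" using that by (simp add: center_def)
      also have "\<dots> = a * smul c x" by (rule smul_mult_right)
      finally show ?thesis .
    qed
    then show ?thesis unfolding center_def by blast
  qed
qed

lemma decomp_scal:
  assumes "subspace I" "finite S" "span (S \<union> I) = UNIV"
  shows "\<exists>\<beta>. x - (\<Sum>s\<in>S. smul (\<beta> s) s) \<in> I"
proof -
  have "x \<in> span (S \<union> I)" using assms by simp
  then obtain u v where uv: "x = u + v" "u \<in> span S" "v \<in> span I"
    unfolding span_Un by blast
  from uv(2) obtain \<beta> where "u = (\<Sum>s\<in>S. smul (\<beta> s) s)"
    unfolding span_finite[OF assms(2)] by blast
  moreover have "v \<in> I" using uv(3) assms(1) by (metis span_eq_iff)
  ultimately show ?thesis using uv(1) by (intro exI[of _ \<beta>]) simp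
qed

lemma decomp:
  assumes "two_sided_ideal I" "finite S" "span (S \<union> I) = UNIV"
  shows "\<exists>c. (\<forall>s. c s \<in> center) \<and> x - (\<Sum>s\<in>S. c s * s) \<in> I"
proof -
  obtain \<beta> where b: "x - (\<Sum>s\<in>S. smul (\<beta> s) s) \<in> I"
    using decomp_scal[OF ideal_subspace[OF assms(1)] assms(2,3)] by blast
  have "smul (\<beta> s) s = smul (\<beta> s) 1 * s" for s by (rule smul_one_mult)
  then show ?thesis using b smul1_center
    by (intro exI[of _ "\<lambda>s. smul (\<beta> s) 1"]) simp
qed

lemma lemL:
  assumes finS: "finite S" and sp: "span (S \<union> W) = UNIV" and W: "subspace W"
    and n: "card S < n"
  shows "\<exists>\<alpha>. (\<exists>i<n. \<alpha> i \<noteq> 0) \<and> (\<Sum>i<n. smul (\<alpha> i) (x i)) \<in> W"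
proof -
  have "\<forall>i. \<exists>u. u \<in> span S \<and> x i - u \<in> W"
  proof
    fix i
    have "x i \<in> span (S \<union> W)" using sp by simp
    then obtain u v where "x i = u + v" "u \<in> span S" "v \<in> span W"
      unfolding span_Un by blast
    moreover have "v \<in> W" using \<open>v \<in> span W\<close> W by (metis span_eq_iff)
    ultimately show "\<exists>u. u \<in> span S \<and> x i - u \<in> W" by auto
  qed
  then obtain s where s: "\<And>i. s i \<in> span S" "\<And>i. x i - s i \<in> W" by metis
  show ?thesis
  proof (cases "inj_on s {..<n}")
    case False
    then obtain i j where ij: "i < n" "j < n" "i \<noteq> j" "s i = s j"
      unfolding inj_on_def by blast
    define \<alpha> where "\<alpha> = (\<lambda>l. if l = i then (1::'k) else if l = j then -1 else 0)"
    have "(\<Sum>l<n. smul (\<alpha> l) (x l)) = (\<Sum>l\<in>{i,j}. smul (\<alpha> l) (x l))"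
      by (rule sum.mono_neutral_right) (auto simp: \<alpha>_def ij)
    also have "\<dots> = (x i - s i) - (x j - s j)" using ij by (simp add: \<alpha>_def)
    also have "\<dots> \<in> W" using s W by (simp add: subspace_diff)
    finally show ?thesis using ij by (intro exI[of _ \<alpha>]) (auto simp: \<alpha>_def)
  next
    case True
    have card: "card (s ` {..<n}) = n" using card_image[OF True] by simp
    have "\<not> independent (s ` {..<n})"
    proof
      assume "independent (s ` {..<n})"
      then have "card (s ` {..<n}) \<le> card S"
        using independent_span_bound[OF finS] s(1) by blast
      then show False using card n by simp
    qed
    then obtain u where u: "\<exists>v\<in>s ` {..<n}. u v \<noteq> 0" "(\<Sum>v\<in>s ` {..<n}. smul (u v) v) = 0"
      using dependent_finite[of "s ` {..<n}"] by auto
    define \<alpha> where "\<alpha> = u \<circ> s"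
    have "(\<Sum>i<n. smul (\<alpha> i) (s i)) = (\<Sum>v\<in>s ` {..<n}. smul (u v) v)"
      by (simp add: sum.reindex[OF True] \<alpha>_def)
    then have z: "(\<Sum>i<n. smul (\<alpha> i) (s i)) = 0" using u by simp
    have "(\<Sum>i<n. smul (\<alpha> i) (x i)) = (\<Sum>i<n. smul (\<alpha> i) (x i - s i)) + (\<Sum>i<n. smul (\<alpha> i) (s i))"
      by (simp add: sum.distrib[symmetric] scale_right_diff_distrib)
    also have "\<dots> = (\<Sum>i<n. smul (\<alpha> i) (x i - s i))" using z by simp
    also have "\<dots> \<in> W" using W s by (intro subspace_sum subspace_scale) auto
    finally show ?thesis using u by (intro exI[of _ \<alpha>]) (auto simp: \<alpha>_def)
  qed
qed

end


definition fstd :: "nat \<Rightarrow> nat list \<Rightarrow> 'k::field" where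
  "fstd m w = (if w \<in> Wm m then of_int (sgnw w) else 0)"

lemma inv_center:
  assumes z: "z \<in> center" and zw: "z * w = 1"
  shows "w \<in> (center::'a::ring_1 set)"
proof -
  have wz: "w * z = 1" using centerD[OF z, of w] zw by simp
  have "w * a = a * w" for a
  proof -
    have "w * a = w * a * (z * w)" using zw by simp
    also have "\<dots> = w * (a * z) * w" by (simp add: mult.assoc)
    also have "\<dots> = w * (z * a) * w" using centerD[OF z, of a] by simp
    also have "\<dots> = (w * z) * a * w" by (simp add: mult.assoc)
    also have "\<dots> = a * w" using wz by simp
    finally show ?thesis .
  qed
  then show ?thesis by (simp add: center_def)
qed

context kalg
begin

lemma nonzero_ring:
  assumes JI: "just_infinite smul"
  shows "(0::'a) \<noteq> 1"
proof
  assume h: "(0::'a) = 1"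
  have "x = 0" for x :: 'a
  proof -
    have "x = x * 1" by simp
    also have "\<dots> = 0" using h[symmetric] by simp
    finally show ?thesis .
  qed
  then have "span {} = (UNIV :: 'a set)" by auto
  then have "fin_dim smul (UNIV :: 'a set)" unfolding fin_dim_def by blast
  then show False using JI unfolding just_infinite_def by blast
qed

lemma PI_from_Phi:
  assumes "\<forall>a::nat \<Rightarrow> 'a. Phi m a = 0"
  shows "satisfies_PI smul"
proof -
  let ?f = "fstd m :: nat list \<Rightarrow> 'k"
  have nz: "of_int (sgnw w) \<noteq> (0::'k)" for w using sgnw_cases[of w] by auto
  have supp: "{w. ?f w \<noteq> 0} = Wm m"
    using nz by (auto simp: fstd_def)
  have sm: "smul (of_int (sgnw w)) v = of_int (sgnw w) * v" for w and v :: 'a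
    using sgnw_cases[of w] by auto
  have ev: "nc_eval smul ?f a = Phi m a" for a
    unfolding nc_eval_def supp Phi_def
    by (rule sum.cong) (auto simp: fstd_def sm)
  have w0: "[0..<m] \<in> Wm m" by (simp add: Wm_def)
  have "pw [0..<m] = (\<lambda>i. i)" by (auto simp: pw_def fun_eq_iff)
  then have "?f [0..<m] = 1" using w0 by (simp add: fstd_def sgnw_def)
  then have "?f \<noteq> (\<lambda>_. 0)" by (metis one_neq_zero)
  moreover have "finite {w. ?f w \<noteq> 0}" using supp finite_Wm by simp
  ultimately show ?thesis unfolding satisfies_PI_def
    by (intro exI[of _ ?f]) (simp add: ev assms)
qed

lemma regular:
  fixes z b :: 'a
  assumes JI: "just_infinite smul" and z: "z \<in> center" "z \<noteq> 0" and zb: "z * b = 0"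
  shows "b = 0"
proof (rule ccontr)
  assume b: "b \<noteq> 0"
  define N where "N = {y. z * y = 0}"
  have Nid: "two_sided_ideal N"
    unfolding two_sided_ideal_def N_def
  proof (intro conjI ballI allI)
    fix x a assume x: "x \<in> {y. z * y = 0}"
    have "z * (a * x) = (z * a) * x" by (simp add: mult.assoc)
    also have "\<dots> = (a * z) * x" using centerD[OF z(1), of a] by simp
    also have "\<dots> = a * (z * x)" by (simp add: mult.assoc)
    finally have "z * (a * x) = a * (z * x)" .
    then show "a * x \<in> {y. z * y = 0}" using x by simp
    show "x * a \<in> {y. z * y = 0}"
      using x by (simp add: mult.assoc[symmetric])
  qed (auto simp: distrib_left)
  have "N \<noteq> {0}" using b zb N_def by auto
  then obtain SN where SN: "finite SN" "span (SN \<union> N) = UNIV"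
    using JI Nid unfolding just_infinite_def fin_codim_def by blast
  define I where "I = range (\<lambda>x. z * x)"
  have Iid: "two_sided_ideal I"
    unfolding two_sided_ideal_def I_def
  proof (intro conjI ballI allI)
    fix x a assume "x \<in> range ((*) z)"
    then obtain y where y: "x = z * y" by blast
    have "a * x = z * (a * y)"
      using centerD[OF z(1), of a] y by (simp add: mult.assoc[symmetric])
    then show "a * x \<in> range ((*) z)" by blast
    have "x * a = z * (y * a)" using y by (simp add: mult.assoc)
    then show "x * a \<in> range ((*) z)" by blast
  next
    show "0 \<in> range ((*) z)" by (rule range_eqI[of _ _ 0]) simp
    show "x + y \<in> range ((*) z)" if "x \<in> range ((*) z)" "y \<in> range ((*) z)" for x y
      using that by (auto simp: distrib_left[symmetric])
  qed
  have "z \<in> I" unfolding I_def by (rule range_eqI[of _ _ 1]) simp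
  then have "I \<noteq> {0}" using z by auto
  then obtain SI where SI: "finite SI" "span (SI \<union> I) = UNIV"
    using JI Iid unfolding just_infinite_def fin_codim_def by blast
  let ?T = "SI \<union> (\<lambda>s. z * s) ` SN"
  have IT: "I \<subseteq> span ?T"
  proof
    fix y assume "y \<in> I"
    then obtain x where y: "y = z * x" unfolding I_def by blast
    obtain \<beta> where \<beta>: "x - (\<Sum>s\<in>SN. smul (\<beta> s) s) \<in> N"
      using decomp_scal[OF ideal_subspace[OF Nid] SN] by blast
    then have "z * x = z * (\<Sum>s\<in>SN. smul (\<beta> s) s)"
      by (simp add: N_def right_diff_distrib)
    also have "\<dots> = (\<Sum>s\<in>SN. smul (\<beta> s) (z * s))"
      by (simp add: sum_distrib_left smul_mult_right)
    also have "\<dots> \<in> span ?T"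
      by (intro span_sum span_scale span_base) auto
    finally show "y \<in> span ?T" using y by simp
  qed
  have "SI \<subseteq> span ?T" by (rule subset_trans[OF _ span_superset]) simp
  then have "SI \<union> I \<subseteq> span ?T" using IT by (rule Un_least)
  then have "span (SI \<union> I) \<subseteq> span ?T" by (rule span_minimal[OF _ subspace_span])
  then have "span ?T = UNIV" using SI by auto
  moreover have "finite ?T" using SI SN by simp
  ultimately have "fin_dim smul (UNIV :: 'a set)" unfolding fin_dim_def
    by (intro exI[of _ ?T]) simp
  then show False using JI unfolding just_infinite_def by blast
qed

end


context kalg
begin

lemma pigeon:
  fixes a :: "nat \<Rightarrow> 'a"
  assumes "finite S" "\<forall>i<m. a i \<in> S" "card S < m"
  shows "\<exists>i j. i < m \<and> j < m \<and> i \<noteq> j \<and> a i = a j"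
proof (rule ccontr)
  assume "\<not> ?thesis"
  then have "inj_on a {..<m}" unfolding inj_on_def by auto
  then have "card (a ` {..<m}) = m" by (simp add: card_image)
  moreover have "a ` {..<m} \<subseteq> S" using assms(2) by auto
  ultimately have "m \<le> card S" using card_mono[OF assms(1)] by metis
  then show False using assms(3) by simp
qed

lemma inverse_exists:
  fixes z :: 'a
  assumes JI: "just_infinite smul" and nPI: "\<not> satisfies_PI smul"
    and z: "z \<in> center" "z \<noteq> 0"
  shows "\<exists>w\<in>center. z * w = 1"
proof (rule ccontr)
  assume ninv: "\<not> ?thesis"
  have reg: "\<And>b. z * b = 0 \<Longrightarrow> b = 0" using regular[OF JI z] by blast
  have regpow: "z ^ j * y = 0 \<Longrightarrow> y = 0" for j y
  proof (induction j arbitrary: y)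
    case 0 then show ?case by simp
  next
    case (Suc j)
    then have "z * (z ^ j * y) = 0" by (simp add: mult.assoc)
    then show ?case using reg Suc.IH by blast
  qed
  have zc: "z ^ n \<in> center" for n using center_power[OF z(1)] .
  define J where "J n = range (\<lambda>b. z ^ n * b)" for n
  have Jid: "two_sided_ideal (J n)" for n
    unfolding two_sided_ideal_def J_def
  proof (intro conjI ballI allI)
    fix x a assume "x \<in> range ((*) (z ^ n))"
    then obtain y where y: "x = z ^ n * y" by blast
    have "a * x = (a * z ^ n) * y" using y by (simp add: mult.assoc)
    also have "\<dots> = (z ^ n * a) * y" using centerD[OF zc[of n], of a] by simp
    also have "\<dots> = z ^ n * (a * y)" by (simp add: mult.assoc)
    finally show "a * x \<in> range ((*) (z ^ n))" by blast
    have "x * a = z ^ n * (y * a)" using y by (simp add: mult.assoc)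
    then show "x * a \<in> range ((*) (z ^ n))" by blast
  next
    show "0 \<in> range ((*) (z ^ n))" by (rule range_eqI[of _ _ 0]) simp
    show "x + y \<in> range ((*) (z ^ n))" if "x \<in> range ((*) (z ^ n))" "y \<in> range ((*) (z ^ n))" for x y
      using that by (auto simp: distrib_left[symmetric])
  qed
  have J1: "x \<in> J 1 \<longleftrightarrow> (\<exists>b. x = z * b)" for x by (auto simp: J_def)
  have n1: "1 \<notin> J 1"
  proof
    assume "1 \<in> J 1"
    then obtain w where "1 = z * w" using J1 by blast
    then show False using ninv inv_center[OF z(1)] by metis
  qed
  have "z \<in> J 1" using J1 by (metis mult_1_right)
  then have "J 1 \<noteq> {0}" using z by auto
  then obtain S where S: "finite S" "span (S \<union> J 1) = UNIV"
    using JI Jid unfolding just_infinite_def fin_codim_def by blast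
  have R: "\<exists>c. (\<forall>s. c s \<in> center) \<and> x - (\<Sum>s\<in>S. c s * s) \<in> J n" for n x
  proof (induction n arbitrary: x)
    case 0
    show ?case by (intro exI[of _ "\<lambda>_. 0"]) (auto simp: J_def center_0)
  next
    case (Suc n)
    obtain c where c: "\<forall>s. c s \<in> center" and cx: "x - (\<Sum>s\<in>S. c s * s) \<in> J n"
      using Suc.IH by blast
    obtain b where b: "x - (\<Sum>s\<in>S. c s * s) = z ^ n * b" using cx by (auto simp: J_def)
    obtain d where d: "\<forall>s. d s \<in> center" and db: "b - (\<Sum>s\<in>S. d s * s) \<in> J 1"
      using decomp[OF Jid S] by blast
    obtain b' where b': "b - (\<Sum>s\<in>S. d s * s) = z * b'" using db J1 by blast
    define c' where "c' s = c s + z ^ n * d s" for s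
    have "(\<Sum>s\<in>S. c' s * s) = (\<Sum>s\<in>S. c s * s) + z ^ n * (\<Sum>s\<in>S. d s * s)"
      by (simp add: c'_def distrib_right sum.distrib sum_distrib_left mult.assoc)
    then have "x - (\<Sum>s\<in>S. c' s * s) = z ^ n * b - z ^ n * (\<Sum>s\<in>S. d s * s)"
      using b by (metis diff_diff_eq)
    also have "\<dots> = z ^ n * (b - (\<Sum>s\<in>S. d s * s))" by (simp add: right_diff_distrib)
    also have "\<dots> = z ^ n * (z * b')" using b' by simp
    also have "\<dots> = z ^ Suc n * b'" by (simp only: power_Suc2 mult.assoc)
    finally have "x - (\<Sum>s\<in>S. c' s * s) \<in> J (Suc n)" by (auto simp: J_def)
    moreover have "\<forall>s. c' s \<in> center"
      using c d zc by (auto simp: c'_def intro!: center_add center_mult)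
    ultimately show ?case by blast
  qed
  define m where "m = Suc (card S)"
  have PhiJ: "Phi m a \<in> J n" for a n
  proof (rule GS[OF Jid[of n] S(1) R])
    show "0 \<in> J n" using ideal_0[OF Jid] .
    show "x + y \<in> J n" if "x \<in> J n" "y \<in> J n" for x y using ideal_add[OF Jid] that .
    show "c * x \<in> J n" if "c \<in> center" "x \<in> J n" for c x by (rule ideal_mult_left[OF Jid that(2)])
    show "Phi m a \<in> J n" if H: "\<forall>i<m. a i \<in> S \<union> J n" for a
    proof (cases "\<exists>i<m. a i \<in> J n")
      case True
      then show ?thesis using Phi_ideal[OF Jid] by blast
    next
      case False
      then have "\<forall>i<m. a i \<in> S" using H by blast
      moreover have "card S < m" by (simp add: m_def)
      ultimately obtain i j where "i < m" "j < m" "i \<noteq> j" "a i = a j"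
        using pigeon[OF S(1)] by blast
      then have "Phi m a = 0" by (rule Phi_alt)
      then show ?thesis using ideal_0[OF Jid] by simp
    qed
  qed
  define K where "K = {x. \<forall>n. x \<in> J n}"
  have Kid: "two_sided_ideal K"
    unfolding K_def two_sided_ideal_def
    by (auto intro: ideal_0[OF Jid] ideal_add[OF Jid] ideal_mult_left[OF Jid] ideal_mult_right[OF Jid])
  have "\<not> (\<forall>a::nat \<Rightarrow> 'a. Phi m a = 0)" using PI_from_Phi nPI by blast
  then obtain a0 :: "nat \<Rightarrow> 'a" where "Phi m a0 \<noteq> 0" by blast
  moreover have "Phi m a0 \<in> K" using PhiJ K_def by blast
  ultimately have "K \<noteq> {0}" by auto
  then obtain S' where S': "finite S'" "span (S' \<union> K) = UNIV"
    using JI Kid unfolding just_infinite_def fin_codim_def by blast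
  define N where "N = Suc (card S')"
  obtain \<alpha> where \<alpha>: "\<exists>i<N. \<alpha> i \<noteq> 0" "(\<Sum>i<N. smul (\<alpha> i) (z ^ i)) \<in> K"
    using lemL[OF S' ideal_subspace[OF Kid], of N "\<lambda>i. z ^ i"] N_def by auto
  define j where "j = (LEAST i. i < N \<and> \<alpha> i \<noteq> 0)"
  have j: "j < N" "\<alpha> j \<noteq> 0" using LeastI_ex[OF \<alpha>(1)] j_def by auto
  have below: "\<alpha> i = 0" if "i < j" for i
    using not_less_Least[of i "\<lambda>i. i < N \<and> \<alpha> i \<noteq> 0"] that j(1) j_def by auto
  define q where "q = (\<Sum>i\<in>{j..<N}. smul (\<alpha> i) (z ^ (i - j)))"
  have "(\<Sum>i<N. smul (\<alpha> i) (z ^ i)) = (\<Sum>i\<in>{j..<N}. smul (\<alpha> i) (z ^ i))"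
    by (rule sum.mono_neutral_right) (auto simp: below)
  also have "\<dots> = (\<Sum>i\<in>{j..<N}. z ^ j * smul (\<alpha> i) (z ^ (i - j)))"
  proof (rule sum.cong[OF refl])
    fix i assume "i \<in> {j..<N}"
    then have "z ^ i = z ^ j * z ^ (i - j)" by (simp add: power_add[symmetric])
    then show "smul (\<alpha> i) (z ^ i) = z ^ j * smul (\<alpha> i) (z ^ (i - j))"
      by (simp add: smul_mult_right)
  qed
  also have "\<dots> = z ^ j * q" by (simp add: q_def sum_distrib_left)
  finally have zq: "z ^ j * q \<in> K" using \<alpha>(2) by simp
  have "q \<in> J n" for n
  proof -
    have "z ^ j * q \<in> J (j + n)" using zq K_def by blast
    then obtain b where "z ^ j * q = z ^ (j + n) * b" by (auto simp: J_def)
    then have "z ^ j * (q - z ^ n * b) = 0"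
      by (simp add: right_diff_distrib power_add mult.assoc)
    then have "q - z ^ n * b = 0" by (rule regpow)
    then have "q = z ^ n * b" by simp
    then show ?thesis by (auto simp: J_def)
  qed
  then obtain b where qb: "q = z * b" using J1 by blast
  define r where "r = (\<Sum>i\<in>{Suc j..<N}. smul (\<alpha> i) (z ^ (i - Suc j)))"
  have "q = smul (\<alpha> j) 1 + (\<Sum>i\<in>{Suc j..<N}. smul (\<alpha> i) (z ^ (i - j)))"
    unfolding q_def using j(1) by (simp add: sum.atLeast_Suc_lessThan)
  also have "(\<Sum>i\<in>{Suc j..<N}. smul (\<alpha> i) (z ^ (i - j))) = z * r"
    unfolding r_def sum_distrib_left
  proof (rule sum.cong[OF refl])
    fix i assume "i \<in> {Suc j..<N}"
    then have "i - j = Suc (i - Suc j)" by auto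
    then show "smul (\<alpha> i) (z ^ (i - j)) = z * smul (\<alpha> i) (z ^ (i - Suc j))"
      by (simp add: smul_mult_right)
  qed
  finally have "smul (\<alpha> j) 1 = z * (b - r)" using qb by (simp add: right_diff_distrib)
  then have "smul (inverse (\<alpha> j)) (smul (\<alpha> j) 1) = z * smul (inverse (\<alpha> j)) (b - r)"
    by (simp add: smul_mult_right)
  then have "1 = z * smul (inverse (\<alpha> j)) (b - r)" using j(2) by simp
  then have "1 \<in> J 1" using J1 by blast
  then show False using n1 by blast
qed

lemma center_fin_dim:
  assumes JI: "just_infinite smul" and nPI: "\<not> satisfies_PI smul"
    and nS: "\<not> simple_algebra TYPE('a)"
  shows "fin_dim smul (center :: 'a set)"
proof -
  have nz: "(0::'a) \<noteq> 1" using nonzero_ring[OF JI] .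
  obtain I :: "'a set" where I: "two_sided_ideal I" "I \<noteq> {0}" "I \<noteq> UNIV"
    using nS nz unfolding simple_algebra_def by blast
  obtain S where S: "finite S" "span (S \<union> I) = UNIV"
    using JI I unfolding just_infinite_def fin_codim_def by blast
  have ZI: "x = 0" if "x \<in> center" "x \<in> I" for x
  proof (rule ccontr)
    assume "x \<noteq> 0"
    then obtain w where "x * w = 1" using inverse_exists[OF JI nPI \<open>x \<in> center\<close>] by blast
    then have one: "1 \<in> I" using ideal_mult_right[OF I(1) \<open>x \<in> I\<close>, of w] by simp
    have "y \<in> I" for y using ideal_mult_left[OF I(1) one, of y] by simp
    then show False using I(3) by blast
  qed
  obtain B :: "'a set" where B: "B \<subseteq> center" "independent B" "center \<subseteq> span B"
    by (rule basis_exists[of "center :: 'a set"])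
  have finB: "finite B"
  proof (rule ccontr)
    assume "\<not> finite B"
    define n where "n = Suc (card S)"
    obtain B' where B': "finite B'" "card B' = n" "B' \<subseteq> B"
      using infinite_arbitrarily_large[OF \<open>\<not> finite B\<close>] by blast
    obtain g where g0: "bij_betw g {0..<card B'} B'"
      using ex_bij_betw_nat_finite[OF B'(1)] by blast
    have "{0..<card B'} = {..<n}" using B'(2) by (simp add: atLeast0LessThan)
    then have g: "bij_betw g {..<n} B'" using g0 by simp
    have "card S < n" by (simp add: n_def)
    then obtain \<alpha> where \<alpha>: "\<exists>i<n. \<alpha> i \<noteq> 0" "(\<Sum>i<n. smul (\<alpha> i) (g i)) \<in> I"
      using lemL[OF S ideal_subspace[OF I(1)], of n g] by blast
    have gB: "g i \<in> center" if "i < n" for i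
    proof -
      have "g i \<in> B'" using bij_betwE[OF g] that by simp
      then show ?thesis using B'(3) B(1) by blast
    qed
    have "(\<Sum>i<n. smul (\<alpha> i) (g i)) \<in> center"
      using gB by (intro subspace_sum[OF center_subspace] subspace_scale[OF center_subspace]) auto
    then have sum0: "(\<Sum>i<n. smul (\<alpha> i) (g i)) = 0" using ZI \<alpha>(2) by blast
    define u where "u v = \<alpha> (inv_into {..<n} g v)" for v
    have ug: "u (g i) = \<alpha> i" if "i < n" for i
      using g that by (simp add: u_def bij_betw_def inv_into_f_f)
    have "(\<Sum>v\<in>B'. smul (u v) v) = (\<Sum>i<n. smul (u (g i)) (g i))"
      using sum.reindex_bij_betw[OF g, of "\<lambda>v. smul (u v) v"] by simp
    also have "\<dots> = (\<Sum>i<n. smul (\<alpha> i) (g i))" by (rule sum.cong) (auto simp: ug)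
    finally have "(\<Sum>v\<in>B'. smul (u v) v) = 0" using sum0 by simp
    moreover have "\<exists>v\<in>B'. u v \<noteq> 0"
    proof -
      obtain i where i: "i < n" "\<alpha> i \<noteq> 0" using \<alpha>(1) by blast
      have "g i \<in> B'" using bij_betwE[OF g] i(1) by simp
      moreover have "u (g i) \<noteq> 0" using ug[OF i(1)] i(2) by simp
      ultimately show ?thesis by (rule bexI[rotated])
    qed
    ultimately have "dependent B'" using dependent_finite[OF B'(1)] by blast
    moreover have "independent B'" using independent_mono[OF B(2) B'(3)] .
    ultimately show False by blast
  qed
  have "span B = center" by (rule span_subspace[OF B(1) B(3) center_subspace])
  then show ?thesis unfolding fin_dim_def using finB B(1) by blast
qed

end

theorem proposition2p3:
  fixes smul :: "'k::field \<Rightarrow> 'a::ring_1 \<Rightarrow> 'a"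
  assumes "k_algebra smul"
    and "just_infinite smul"
    and "\<not> satisfies_PI smul"
    and "\<not> simple_algebra TYPE('a)"
  shows "(0::'a) \<noteq> 1 \<and> (\<forall>z\<in>(center::'a set). z \<noteq> 0 \<longrightarrow> (\<exists>w\<in>center. z * w = 1))
         \<and> fin_dim smul (center::'a set)"
proof -
  interpret kalg smul using assms(1) by unfold_locales
  show ?thesis
    using nonzero_ring[OF assms(2)] inverse_exists[OF assms(2,3)] center_fin_dim[OF assms(2-4)]
    by blast
qed

end
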